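(* Let $G$ be a connected threshold graph of order $n\ge 4$ and size $m$ with $n-1<m<\binom{n}{2}$, with $c$ type 1 vertices, forward one position sequence $(f_1,\ldots,f_c)$ and numbers $F_p$ as in the context. Let $\Phi\in\mathbb{R}^{c\times c}$ be given by $\Phi_{ij}=f_{\min\{i,j\}}$, $\mathbf{1}\in\mathbb{R}^c$ the all-ones vector, and $\lambda_1,\ldots,\lambda_c$ the eigenvalues of $\Phi$ with corresponding orthonormal eigenvectors $x_1,\ldots,x_c$. Then \[F_p=\sum_{i=1}^c(\mathbf{1}^\intercal x_i)^2\,\lambda_i^p\qquad(p\in\mathbb{N}_0).\]
   Context: A threshold graph is a simple graph whose vertices can be ordered $v_1,\ldots,v_n$ so that for each $2\le i\le n$, $v_i$ is either adjacent to all of $v_1,\ldots,v_{i-1}$ (then $a_i=1$) or to none of them (then $a_i=0$); by convention $a_1=1$. Vertex $v_i$ is of type 1 if $a_i=1$ and of type 0 if $a_i=0$; $c$ and $z$ are the numbers of type 1 and type 0 vertices. The backwards zero position sequence $(b_1,\ldots,b_z)$: $b_i$ is the number of type 1 vertices appearing after the $i$-th type 0 vertex in the order $v_1,\ldots,v_n$. The forward one position sequence $(f_1,\ldots,f_c)$: $f_i$ is the number of type 0 vertices appearing before the $i$-th type 1 vertex in the order $v_1,\ldots,v_n$. Define $F_0=c$ and for $p\ge1$, $F_p=\sum_{i_1,\ldots,i_p=1}^{z} b_{i_1}\min\{b_{i_1},b_{i_2}\}\cdots\min\{b_{i_{p-1}},b_{i_p}\}\,b_{i_p}$. *)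

theory Defs
  imports Main "Jordan_Normal_Form.Matrix"
begin

definition simple_graph :: "'v set \<Rightarrow> ('v \<Rightarrow> 'v \<Rightarrow> bool) \<Rightarrow> bool" where
  "simple_graph V E \<longleftrightarrow> finite V \<and> (\<forall>x y. E x y \<longrightarrow> x \<in> V \<and> y \<in> V \<and> x \<noteq> y \<and> E y x)"

definition graph_connected :: "'v set \<Rightarrow> ('v \<Rightarrow> 'v \<Rightarrow> bool) \<Rightarrow> bool" where
  "graph_connected V E \<longleftrightarrow> (\<forall>x\<in>V. \<forall>y\<in>V. E\<^sup>*\<^sup>* x y)"

definition graph_edges :: "('v \<Rightarrow> 'v \<Rightarrow> bool) \<Rightarrow> 'v set set" where
  "graph_edges E = {{x, y} | x y. E x y}"

text \<open>Threshold ordering, 0-indexed: the list vs enumerates V as v_1,...,v_n,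
and the list as gives a_1,...,a_n (True = 1); a_1 = 1 by convention, and for
each later vertex, it is adjacent to all earlier vertices if a_i = 1 and to
none of them if a_i = 0.\<close>

definition threshold_order :: "'v set \<Rightarrow> ('v \<Rightarrow> 'v \<Rightarrow> bool) \<Rightarrow> 'v list \<Rightarrow> bool list \<Rightarrow> bool" where
  "threshold_order V E vs as \<longleftrightarrow>
     distinct vs \<and> set vs = V \<and> length as = length vs \<and> as \<noteq> [] \<and> hd as \<and>
     (\<forall>i < length vs. \<forall>j < i. E (vs ! i) (vs ! j) \<longleftrightarrow> as ! i)"

definition one_positions :: "bool list \<Rightarrow> nat list" where
  "one_positions as = filter (\<lambda>i. as ! i) [0..<length as]"

definition zero_positions :: "bool list \<Rightarrow> nat list" where
  "zero_positions as = filter (\<lambda>i. \<not> as ! i) [0..<length as]"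

definition fwd_one_seq :: "bool list \<Rightarrow> nat list" where
  "fwd_one_seq as = map (\<lambda>k. length (filter (\<lambda>j. \<not> as ! j) [0..<k])) (one_positions as)"

definition bwd_zero_seq :: "bool list \<Rightarrow> nat list" where
  "bwd_zero_seq as = map (\<lambda>k. length (filter (\<lambda>j. as ! j) [Suc k..<length as])) (zero_positions as)"

text \<open>F_0 = c; for p \<ge> 1, F_p is the sum over all index tuples (i_1,...,i_p)
(here functions g on {0..<p}) of b_{i_1} min(b_{i_1},b_{i_2}) ... min(b_{i_{p-1}},b_{i_p}) b_{i_p}.\<close>

definition F_num :: "bool list \<Rightarrow> nat \<Rightarrow> real" where
  "F_num as p =
     (let b = bwd_zero_seq as; z = length b in
      if p = 0 then real (length (one_positions as))
      else (\<Sum>g \<in> {0..<p} \<rightarrow>\<^sub>E {0..<z}.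
              real (b ! g 0) * (\<Prod>k<p - 1. real (min (b ! g k) (b ! g (Suc k)))) * real (b ! g (p - 1))))"

end

theory Submission
  imports Defs "Jordan_Normal_Form.Determinant"
begin


definition Tm :: "nat \<Rightarrow> (nat \<Rightarrow> nat \<Rightarrow> real) \<Rightarrow> (nat \<Rightarrow> real) \<Rightarrow> nat \<Rightarrow> real" where
  "Tm n M h = (\<lambda>t. \<Sum>s<n. M t s * h s)"

lemma Tm_apply: "Tm n M h t = (\<Sum>s<n. M t s * h s)"
  by (simp add: Tm_def)

lemma sum_PiE_Suc:
  "(\<Sum>g \<in> {0..<Suc n} \<rightarrow>\<^sub>E Z. F g) = (\<Sum>g \<in> {0..<n} \<rightarrow>\<^sub>E Z. \<Sum>t\<in>Z. F (g(n := t)))"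
proof -
  have "{0..<Suc n} = insert n {0..<n}" by auto
  hence "(\<Sum>g \<in> {0..<Suc n} \<rightarrow>\<^sub>E Z. F g) = (\<Sum>g \<in> (\<lambda>(y, g). g(n := y)) ` (Z \<times> ({0..<n} \<rightarrow>\<^sub>E Z)). F g)"
    using PiE_insert_eq[of n "{0..<n}" "\<lambda>_. Z"] by simp
  also have "\<dots> = (\<Sum>yg \<in> Z \<times> ({0..<n} \<rightarrow>\<^sub>E Z). F ((snd yg)(n := fst yg)))"
    by (subst sum.reindex) (auto intro: inj_combinator[of n "{0..<n}" "\<lambda>_. Z", simplified] simp: case_prod_beta)
  also have "\<dots> = (\<Sum>t\<in>Z. \<Sum>g \<in> {0..<n} \<rightarrow>\<^sub>E Z. F (g(n := t)))"
    by (simp add: sum.cartesian_product split_def)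
  also have "\<dots> = (\<Sum>g \<in> {0..<n} \<rightarrow>\<^sub>E Z. \<Sum>t\<in>Z. F (g(n := t)))"
    by (rule sum.swap)
  finally show ?thesis .
qed

lemma PiE_walk:
  "(\<Sum>g \<in> {0..<Suc p} \<rightarrow>\<^sub>E {0..<z}. bb (g 0) * (\<Prod>k<p. M (g k) (g (Suc k))) * h (g p))
   = (\<Sum>t<z. bb t * ((Tm z M ^^ p) h) t)"
proof (induction p arbitrary: h)
  case 0
  show ?case by (subst sum_PiE_Suc) (simp add: lessThan_atLeast0)
next
  case (Suc p)
  have "(\<Sum>g \<in> {0..<Suc (Suc p)} \<rightarrow>\<^sub>E {0..<z}. bb (g 0) * (\<Prod>k<Suc p. M (g k) (g (Suc k))) * h (g (Suc p)))
     = (\<Sum>g \<in> {0..<Suc p} \<rightarrow>\<^sub>E {0..<z}. \<Sum>t\<in>{0..<z}. bb (g 0) * ((\<Prod>k<p. M (g k) (g (Suc k))) * M (g p) t) * h t)"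
    unfolding sum_PiE_Suc
    apply (intro sum.cong refl)
    apply (simp add: lessThan_Suc)
    done
  also have "\<dots> = (\<Sum>g \<in> {0..<Suc p} \<rightarrow>\<^sub>E {0..<z}. bb (g 0) * (\<Prod>k<p. M (g k) (g (Suc k))) * Tm z M h (g p))"
    by (simp add: Tm_apply sum_distrib_left mult.assoc lessThan_atLeast0)
  also have "\<dots> = (\<Sum>t<z. bb t * ((Tm z M ^^ p) (Tm z M h)) t)"
    by (rule Suc.IH)
  finally show ?case by (simp add: funpow_Suc_right del: funpow.simps)
qed

lemma comb_L1:
  assumes Phi: "\<And>j k. j < c \<Longrightarrow> k < c \<Longrightarrow> Phi j k = (\<Sum>t<z. A t j * A t k)"
    and M: "\<And>t s. t < z \<Longrightarrow> s < z \<Longrightarrow> M t s = (\<Sum>j<c. A t j * A s j)"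
    and bb: "\<And>t. t < z \<Longrightarrow> bb t = (\<Sum>j<c. A t j)"
    and t: "t < z"
  shows "(\<Sum>j<c. A t j * ((Tm c Phi ^^ n) (\<lambda>_. 1)) j) = ((Tm z M ^^ n) bb) t"
  using t
proof (induction n arbitrary: t)
  case 0 thus ?case by (simp add: bb)
next
  case (Suc n)
  define Q where "Q = (Tm c Phi ^^ n) (\<lambda>_. 1)"
  have "(\<Sum>j<c. A t j * ((Tm c Phi ^^ Suc n) (\<lambda>_. 1)) j)
      = (\<Sum>j<c. A t j * (\<Sum>k<c. (\<Sum>s<z. A s j * A s k) * Q k))"
    by (intro sum.cong refl) (auto simp: Tm_apply Q_def Phi intro!: sum.cong)
  also have "\<dots> = (\<Sum>s<z. (\<Sum>j<c. A t j * A s j) * (\<Sum>k<c. A s k * Q k))"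
  proof -
    have "(\<Sum>j<c. A t j * (\<Sum>k<c. (\<Sum>s<z. A s j * A s k) * Q k))
        = (\<Sum>j<c. \<Sum>k<c. \<Sum>s<z. A t j * A s j * (A s k * Q k))"
      by (simp add: sum_distrib_left sum_distrib_right mult_ac)
    also have "\<dots> = (\<Sum>j<c. \<Sum>s<z. \<Sum>k<c. A t j * A s j * (A s k * Q k))"
      by (intro sum.cong refl sum.swap)
    also have "\<dots> = (\<Sum>s<z. \<Sum>j<c. \<Sum>k<c. A t j * A s j * (A s k * Q k))"
      by (rule sum.swap)
    also have "\<dots> = (\<Sum>s<z. (\<Sum>j<c. A t j * A s j) * (\<Sum>k<c. A s k * Q k))"
      unfolding sum_distrib_right by (simp only: sum_distrib_left)
    finally show ?thesis .
  qed
  also have "\<dots> = (\<Sum>s<z. M t s * ((Tm z M ^^ n) bb) s)"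
    using Suc.prems by (intro sum.cong refl) (auto simp: M Suc.IH Q_def)
  also have "\<dots> = ((Tm z M ^^ Suc n) bb) t"
    by (subst funpow.simps(2), subst comp_apply, rule Tm_apply[symmetric])
  finally show ?case .
qed

lemma complete_onb:
  fixes x :: "nat \<Rightarrow> real vec"
  assumes car: "\<And>i. i<c \<Longrightarrow> x i \<in> carrier_vec c"
    and orth: "\<And>i j. i<c \<Longrightarrow> j<c \<Longrightarrow> x i \<bullet> x j = (if i=j then 1 else 0)"
    and r: "r < c" and s: "s < c"
  shows "(\<Sum>i<c. x i $ r * x i $ s) = (if r=s then 1 else 0)"
proof -
  define X where "X = mat c c (\<lambda>(r,i). x i $ r)"
  have Xc: "X \<in> carrier_mat c c" by (simp add: X_def)
  have "transpose_mat X * X = 1\<^sub>m c"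
  proof (rule eq_matI)
    fix i j assume ij: "i < dim_row (1\<^sub>m c)" "j < dim_col (1\<^sub>m c)"
    hence "(transpose_mat X * X) $$ (i, j) = x i \<bullet> x j"
      using car[of i] car[of j] by (auto simp: X_def scalar_prod_def)
    thus "(transpose_mat X * X) $$ (i, j) = 1\<^sub>m c $$ (i, j)"
      using ij orth by auto
  qed (auto simp: X_def)
  hence "X * transpose_mat X = 1\<^sub>m c"
    using mat_mult_left_right_inverse[of "transpose_mat X" c X] Xc by auto
  hence "(X * transpose_mat X) $$ (r, s) = 1\<^sub>m c $$ (r, s)" by simp
  thus ?thesis using r s by (auto simp: X_def scalar_prod_def lessThan_atLeast0)
qed

lemma spectral:
  fixes x :: "nat \<Rightarrow> real vec"
  assumes eig: "\<And>i r. i<c \<Longrightarrow> r<c \<Longrightarrow> (\<Sum>k<c. Phi r k * x i $ k) = lam i * x i $ r"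
    and compl: "\<And>r s. r<c \<Longrightarrow> s<c \<Longrightarrow> (\<Sum>i<c. x i $ r * x i $ s) = (if r = s then 1 else 0)"
  shows "(\<Sum>j<c. ((Tm c Phi ^^ p) (\<lambda>_. 1)) j) = (\<Sum>i<c. (\<Sum>r<c. x i $ r)^2 * lam i ^ p)"
proof -
  define u where "u i = (\<Sum>r<c. x i $ r)" for i
  have Q: "((Tm c Phi ^^ p) (\<lambda>_. 1)) j = (\<Sum>i<c. u i * lam i ^ p * x i $ j)" if "j < c" for j
    using that
  proof (induction p arbitrary: j)
    case 0
    have "(\<Sum>i<c. u i * lam i ^ 0 * x i $ j) = (\<Sum>i<c. \<Sum>r<c. x i $ r * x i $ j)"
      by (simp add: u_def sum_distrib_right)
    also have "\<dots> = (\<Sum>r<c. \<Sum>i<c. x i $ r * x i $ j)" by (rule sum.swap)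
    also have "\<dots> = (\<Sum>r<c. (if r = j then 1 else 0))"
      using 0 by (intro sum.cong refl) (simp add: compl)
    also have "\<dots> = 1" using 0 by simp
    finally show ?case by simp
  next
    case (Suc p)
    have "((Tm c Phi ^^ Suc p) (\<lambda>_. 1)) j = (\<Sum>k<c. Phi j k * (\<Sum>i<c. u i * lam i ^ p * x i $ k))"
      by (simp only: funpow.simps comp_apply Tm_apply) (intro sum.cong refl, simp add: Suc.IH)
    also have "\<dots> = (\<Sum>i<c. u i * lam i ^ p * (\<Sum>k<c. Phi j k * x i $ k))"
      unfolding sum_distrib_left by (subst sum.swap) (simp add: mult_ac)
    also have "\<dots> = (\<Sum>i<c. u i * lam i ^ Suc p * x i $ j)"
      using Suc.prems by (intro sum.cong refl) (simp add: eig)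
    finally show ?case .
  qed
  have "(\<Sum>j<c. ((Tm c Phi ^^ p) (\<lambda>_. 1)) j) = (\<Sum>j<c. \<Sum>i<c. u i * lam i ^ p * x i $ j)"
    by (intro sum.cong refl) (simp add: Q)
  also have "\<dots> = (\<Sum>i<c. u i * lam i ^ p * u i)"
    by (subst sum.swap) (simp add: u_def sum_distrib_left)
  finally show ?thesis by (simp add: u_def power2_eq_square mult_ac)
qed

lemma filter_lt_upt:
  assumes "k \<le> L" shows "filter (\<lambda>i. i < k) (filter P [0..<L]) = filter P [0..<k]"
proof -
  have e: "[0..<L] = [0..<k] @ [k..<L]" using upt_add_eq_append[of 0 k "L-k"] assms by simp
  have 1: "filter (\<lambda>i. i < k) (filter P [0..<k]) = filter P [0..<k]"
    by (rule filter_True) auto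
  have 2: "filter (\<lambda>i. i < k) (filter P [k..<L]) = []"
    by (rule filter_False) auto
  show ?thesis unfolding e filter_append 1 2 by simp
qed

lemma filter_gt_upt: "filter (\<lambda>i. k < i) (filter P [0..<L]) = filter P [Suc k..<L]"
  by (induction L) auto

lemma main_thm:
  fixes as :: "bool list" and lam :: "nat \<Rightarrow> real" and x :: "nat \<Rightarrow> real vec" and p :: nat
  assumes car: "\<And>i. i < length (fwd_one_seq as) \<Longrightarrow> x i \<in> carrier_vec (length (fwd_one_seq as))"
    and eigv: "\<And>i. i < length (fwd_one_seq as) \<Longrightarrow>
           mat (length (fwd_one_seq as)) (length (fwd_one_seq as))
               (\<lambda>(i, j). real (fwd_one_seq as ! min i j)) *\<^sub>v x i = lam i \<cdot>\<^sub>v x i"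
    and orth: "\<And>i j. i < length (fwd_one_seq as) \<Longrightarrow> j < length (fwd_one_seq as) \<Longrightarrow>
           x i \<bullet> x j = (if i = j then 1 else 0)"
  shows "F_num as p =
           (\<Sum>i < length (fwd_one_seq as). (vec (length (fwd_one_seq as)) (\<lambda>_. 1) \<bullet> x i)^2 * lam i ^ p)"
proof -
  define L where "L = length as"
  define Os where "Os = one_positions as"
  define Z where "Z = zero_positions as"
  define f where "f = fwd_one_seq as"
  define b where "b = bwd_zero_seq as"
  define c where "c = length f"
  define z where "z = length b"
  have cO: "c = length Os" by (simp add: c_def f_def Os_def fwd_one_seq_def)
  have zZ: "z = length Z" by (simp add: z_def b_def Z_def bwd_zero_seq_def)
  have O_eq: "Os = filter (\<lambda>i. as ! i) [0..<L]" by (simp add: Os_def L_def one_positions_def)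
  have Z_eq: "Z = filter (\<lambda>i. \<not> as ! i) [0..<L]" by (simp add: Z_def L_def zero_positions_def)
  have sortedO: "sorted Os" unfolding O_eq by (rule sorted_wrt_filter) simp
  have Oj: "Os ! j < L \<and> as ! (Os ! j)" if "j < c" for j
  proof -
    have "Os ! j \<in> set Os" using that cO by simp
    thus ?thesis by (simp add: O_eq)
  qed
  have Zt: "Z ! t < L \<and> \<not> as ! (Z ! t)" if "t < z" for t
  proof -
    have "Z ! t \<in> set Z" using that zZ by simp
    thus ?thesis by (simp add: Z_eq)
  qed
  have fj: "f ! j = length (filter (\<lambda>i. \<not> as ! i) [0..<Os ! j])" if "j < c" for j
    using that cO by (simp add: f_def fwd_one_seq_def Os_def)
  have bt: "b ! t = length (filter (\<lambda>i. as ! i) [Suc (Z ! t)..<L])" if "t < z" for t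
    using that zZ by (simp add: b_def bwd_zero_seq_def Z_def L_def)
  define A :: "nat \<Rightarrow> nat \<Rightarrow> real" where "A t j = of_bool (Z ! t < Os ! j)" for t j
  define Phi where "Phi j k = real (f ! min j k)" for j k
  define bb where "bb t = real (b ! t)" for t
  define M where "M t s = real (min (b ! t) (b ! s))" for t s
  have Fa: "real (f ! j) = (\<Sum>t<z. A t j)" if "j < c" for j
  proof -
    have "(\<Sum>t<z. A t j) = real (card ({..<z} \<inter> {t. Z ! t < Os ! j}))"
      by (simp add: A_def)
    also have "{..<z} \<inter> {t. Z ! t < Os ! j} = {t. t < length Z \<and> Z ! t < Os ! j}"
      using zZ by auto
    also have "card \<dots> = length (filter (\<lambda>i. i < Os ! j) Z)"
      by (simp add: length_filter_conv_card)
    also have "filter (\<lambda>i. i < Os ! j) Z = filter (\<lambda>i. \<not> as ! i) [0..<Os ! j]"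
      unfolding Z_eq by (rule filter_lt_upt) (use Oj[OF that] in simp)
    finally show ?thesis using fj[OF that] by simp
  qed
  have Fb: "bb t = (\<Sum>j<c. A t j)" if "t < z" for t
  proof -
    have "(\<Sum>j<c. A t j) = real (card ({..<c} \<inter> {j. Z ! t < Os ! j}))"
      by (simp add: A_def)
    also have "{..<c} \<inter> {j. Z ! t < Os ! j} = {j. j < length Os \<and> Z ! t < Os ! j}"
      using cO by auto
    also have "card \<dots> = length (filter (\<lambda>i. Z ! t < i) Os)"
      by (simp add: length_filter_conv_card)
    also have "filter (\<lambda>i. Z ! t < i) Os = filter (\<lambda>i. as ! i) [Suc (Z ! t)..<L]"
      unfolding O_eq by (rule filter_gt_upt)
    finally show ?thesis using bt[OF that] by (simp add: bb_def)
  qed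
  have Fc: "M t s = (\<Sum>j<c. A t j * A s j)" if "t < z" "s < z" for t s
  proof (cases "Z ! t \<le> Z ! s")
    case True
    have e: "A t j * A s j = A s j" for j using True by (auto simp: A_def)
    have "bb s \<le> bb t" unfolding Fb[OF that(1)] Fb[OF that(2)]
      by (rule sum_mono) (use True in \<open>auto simp: A_def\<close>)
    thus ?thesis by (simp add: M_def e Fb[OF that(2), symmetric] bb_def min_def)
  next
    case False
    have e: "A t j * A s j = A t j" for j using False by (auto simp: A_def)
    have "bb t \<le> bb s" unfolding Fb[OF that(1)] Fb[OF that(2)]
      by (rule sum_mono) (use False in \<open>auto simp: A_def\<close>)
    thus ?thesis by (simp add: M_def e Fb[OF that(1), symmetric] bb_def min_def)
  qed
  have FPhi: "Phi j k = (\<Sum>t<z. A t j * A t k)" if "j < c" "k < c" for j k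
  proof -
    have "A t (min j k) = A t j * A t k" for t
    proof (cases "j \<le> k")
      case True
      hence "Os ! j \<le> Os ! k" using sortedO that cO by (simp add: sorted_nth_mono)
      thus ?thesis using True by (auto simp: A_def min_def)
    next
      case False
      hence "Os ! k \<le> Os ! j" using sortedO that cO by (simp add: sorted_nth_mono)
      thus ?thesis using False by (auto simp: A_def min_def)
    qed
    thus ?thesis using Fa[of "min j k"] that by (simp add: Phi_def)
  qed
  have eig: "(\<Sum>k<c. Phi r k * x i $ k) = lam i * x i $ r" if "i < c" "r < c" for i r
  proof -
    have "(mat c c (\<lambda>(i, j). real (f ! min i j)) *\<^sub>v x i) $ r = (lam i \<cdot>\<^sub>v x i) $ r"
      using eigv[of i] that by (simp add: c_def f_def)
    thus ?thesis using car[of i] that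
      by (auto simp: c_def f_def Phi_def scalar_prod_def lessThan_atLeast0)
  qed
  have compl: "(\<Sum>i<c. x i $ r * x i $ s) = (if r = s then 1 else 0)" if "r < c" "s < c" for r s
    using complete_onb[of c x r s] car orth that by (simp add: c_def f_def)
  have spec: "(\<Sum>j<c. ((Tm c Phi ^^ q) (\<lambda>_. 1)) j) = (\<Sum>i<c. (\<Sum>r<c. x i $ r)^2 * lam i ^ q)" for q
    by (rule spectral[OF eig compl]) auto
  have dotone: "vec c (\<lambda>_. 1) \<bullet> x i = (\<Sum>r<c. x i $ r)" if "i < c" for i
    using car[of i] that by (auto simp: scalar_prod_def lessThan_atLeast0 c_def f_def intro!: sum.cong)
  have rhs: "(\<Sum>i < length (fwd_one_seq as). (vec (length (fwd_one_seq as)) (\<lambda>_. 1) \<bullet> x i)^2 * lam i ^ p)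
      = (\<Sum>i<c. (\<Sum>r<c. x i $ r)^2 * lam i ^ p)"
    using dotone unfolding c_def f_def by (intro sum.cong refl) simp
  have lhs: "F_num as p = (\<Sum>j<c. ((Tm c Phi ^^ p) (\<lambda>_. 1)) j)"
  proof (cases p)
    case 0
    thus ?thesis by (simp add: F_num_def cO Os_def)
  next
    case (Suc n)
    have "F_num as p = (\<Sum>g \<in> {0..<Suc n} \<rightarrow>\<^sub>E {0..<z}. bb (g 0) * (\<Prod>k<n. M (g k) (g (Suc k))) * bb (g n))"
      by (simp add: F_num_def Suc Let_def bb_def M_def z_def b_def)
    also have "\<dots> = (\<Sum>t<z. bb t * ((Tm z M ^^ n) bb) t)"
      by (rule PiE_walk)
    also have "\<dots> = (\<Sum>t<z. (\<Sum>j<c. A t j) * (\<Sum>k<c. A t k * ((Tm c Phi ^^ n) (\<lambda>_. 1)) k))"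
      by (intro sum.cong refl) (simp add: Fb comb_L1[OF FPhi Fc Fb])
    also have "\<dots> = (\<Sum>j<c. ((Tm c Phi ^^ Suc n) (\<lambda>_. 1)) j)"
    proof -
      define Q where "Q = (Tm c Phi ^^ n) (\<lambda>_. 1)"
      have "(\<Sum>j<c. ((Tm c Phi ^^ Suc n) (\<lambda>_. 1)) j) = (\<Sum>j<c. \<Sum>k<c. (\<Sum>t<z. A t j * A t k) * Q k)"
        apply (rule sum.cong[OF refl])
        apply (simp only: funpow.simps comp_apply Tm_apply Q_def)
        apply (rule sum.cong[OF refl])
        apply (simp add: FPhi)
        done
      also have "\<dots> = (\<Sum>j<c. \<Sum>k<c. \<Sum>t<z. A t j * (A t k * Q k))"
        by (simp only: sum_distrib_right mult.assoc)
      also have "\<dots> = (\<Sum>j<c. \<Sum>t<z. \<Sum>k<c. A t j * (A t k * Q k))"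
        by (intro sum.cong refl sum.swap)
      also have "\<dots> = (\<Sum>t<z. \<Sum>j<c. \<Sum>k<c. A t j * (A t k * Q k))"
        by (rule sum.swap)
      also have "\<dots> = (\<Sum>t<z. (\<Sum>j<c. A t j) * (\<Sum>k<c. A t k * Q k))"
        unfolding sum_distrib_right by (simp only: sum_distrib_left)
      finally show ?thesis by (simp add: Q_def)
    qed
    finally show ?thesis using Suc by simp
  qed
  show ?thesis using lhs rhs spec by simp
qed


theorem corollaryA4:
  fixes V :: "'v set" and E :: "'v \<Rightarrow> 'v \<Rightarrow> bool" and vs :: "'v list" and as :: "bool list"
    and lam :: "nat \<Rightarrow> real" and x :: "nat \<Rightarrow> real vec" and p :: nat
  assumes "simple_graph V E"
    and "threshold_order V E vs as"
    and "graph_connected V E"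
    and "card V \<ge> 4"
    and "card V - 1 < card (graph_edges E)"
    and "card (graph_edges E) < card V choose 2"
    and "\<And>i. i < length (fwd_one_seq as) \<Longrightarrow> x i \<in> carrier_vec (length (fwd_one_seq as))"
    and "\<And>i. i < length (fwd_one_seq as) \<Longrightarrow>
           mat (length (fwd_one_seq as)) (length (fwd_one_seq as))
               (\<lambda>(i, j). real (fwd_one_seq as ! min i j)) *\<^sub>v x i = lam i \<cdot>\<^sub>v x i"
    and "\<And>i j. i < length (fwd_one_seq as) \<Longrightarrow> j < length (fwd_one_seq as) \<Longrightarrow>
           x i \<bullet> x j = (if i = j then 1 else 0)"
  shows "F_num as p =
           (\<Sum>i < length (fwd_one_seq as). (vec (length (fwd_one_seq as)) (\<lambda>_. 1) \<bullet> x i)^2 * lam i ^ p)"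
    using assms(7-9) by (rule main_thm)

end
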